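(* Consider the multi-agent setting described in the context, with parameters $\alpha>0$ and $F\in\mathbb Z_{\ge0}$. Assume: - the set $\mathcal A$ of misbehaving agents is $F$-local; - the digraph $\mathcal D$ is $(2F+1)$-robust. Then the normal agents achieve Finite-Time Resilient Consensus. That is, for trajectories $x_{\mathcal N}:[0,\infty)\to\mathbb R^{|\mathcal N|}$ of the normal agents: (i) $x_i(t)\in[m(x_{\mathcal N}(0)),M(x_{\mathcal N}(0))]$ for all $t\ge0$ and all $i\in\mathcal N$; (ii) there exists $T:\mathbb R^{|\mathcal N|}\to\mathbb R_{\ge0}$ such that $V(x_{\mathcal N}(t))=0$, equivalently $x_{\mathcal N}(t)\in\mathrm{span}(\mathbf 1)$, for all $t\ge T(x_{\mathcal N}(0))$.
   Context: Setting. Let $\mathcal D=(\mathcal V,\mathcal E)$ be a digraph with $\mathcal V=\{1,\dots,n\}$ and $n\ge2$. An edge $(i,j)\in\mathcal E$ means that agent $j$ receives information from agent $i$. The in-neighbor set of $i$ is $\mathcal V_i=\{j:(j,i)\in\mathcal E\}$, and $\mathcal J_i=\mathcal V_i\cup\{i\}$. - A nonempty $S\subset\mathcal V$ is $r$-reachable if some $i\in S$ has $|\mathcal V_i\setminus S|\ge r$. - $\mathcal D$ is $r$-robust if for every pair of nonempty disjoint subsets of $\mathcal V$, at least one of them is $r$-reachable. Dynamics and communication. Each agent has a scalar state with $\dot x_i(t)=u_i(t)$, with initial time $0$. Fix a strictly increasing $g:\mathbb R\to\mathbb R$ (not necessarily continuous). At time $t$, agent $i$ receives from each in-neighbor $j$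 a value $g(x^i_j(t))$. The agents are partitioned into normal agents $\mathcal N$ and misbehaving agents $\mathcal A$. - A normal agent $j$ sends $g(x_j(t))$ to all its out-neighbors, so $x^i_j=x_j$, and updates via the FTRC protocol. - Misbehaving agents may use arbitrary inputs and may send arbitrary, possibly different, values to different out-neighbors. The only restriction is that $t\mapsto g(x^i_k(t))$ is Lebesgue measurable for all $k\in\mathcal A$ and $i\in\mathcal N$. - $\mathcal A$ is $F$-local if $|\mathcal V_i\cap\mathcal A|\le F$ for every $i\in\mathcal V\setminus\mathcal A$. FTRC protocol for a normal agent $i$ at time $t$: 1. Sort the received values $g(x^i_j(t))$, $j\in\mathcal V_i$. 2. If fewer than $F$ values are strictly larger than $g(x_i(t))$, remove all values strictly larger than $g(x_i(t))$; otherwise remove exactly the $F$ largest values. 3. Likewise, if fewer than $F$ values are strictly smaller than $g(x_i(t))$, remove all values strictly smaller; otherwise remove exactly the $F$ smallest values. 4. With $\mathcal R_i(t)$ the set of agents whose values were removed, set $u_i(t)=\alpha\,\mathrm{sign}\big(\sum_{j\in\mathcal J_i\setminus\mathcal R_i(t)}(g(x^i_j(t))-g(x_i(t)))\big)$, where $x^i_i=x_i$ and $\mathrm{sign}(0)=0$. Trajectories and auxiliary functions. Write $x_{\mathcal N}=(x_{\mathcal N_1},\dots,x_{\mathcal N_{|\mathcal N|}})^T$ for a fixed ordering of $\mathcal N$. A trajectory of the normal agents on an interval $I\ni0$ is an absolutely continuous $x_{\mathcal N}:I\to\mathbb R^{|\mathcal N|}$ with $\dot x_{\mathcal N_k}(t)=u_{\mathcal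 N_k}(t)$ for all $k$ and almost every $t\in I$. For $x\in\mathbb R^{|\mathcal N|}$, set $M(x)=\max_k x_k$, $m(x)=\min_k x_k$ and $V(x)=M(x)-m(x)$. Here $\mathbf 1$ is the all-ones vector. *)

theory Defs
  imports "HOL-Analysis.Analysis"
begin

text \<open>Edge (i,j) in E means: agent j receives information from agent i.\<close>

definition in_nbrs :: "(nat \<times> nat) set \<Rightarrow> nat \<Rightarrow> nat set" where
  "in_nbrs E i = {j. (j, i) \<in> E}"

definition r_reachable :: "(nat \<times> nat) set \<Rightarrow> nat set \<Rightarrow> nat \<Rightarrow> bool" where
  "r_reachable E S r \<longleftrightarrow> (\<exists>i\<in>S. card (in_nbrs E i - S) \<ge> r)"

definition r_robust :: "nat set \<Rightarrow> (nat \<times> nat) set \<Rightarrow> nat \<Rightarrow> bool" where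
  "r_robust V E r \<longleftrightarrow>
     (\<forall>S1 S2. S1 \<subseteq> V \<and> S2 \<subseteq> V \<and> S1 \<noteq> {} \<and> S2 \<noteq> {} \<and> S1 \<inter> S2 = {}
        \<longrightarrow> r_reachable E S1 r \<or> r_reachable E S2 r)"

definition F_local :: "nat set \<Rightarrow> (nat \<times> nat) set \<Rightarrow> nat set \<Rightarrow> nat \<Rightarrow> bool" where
  "F_local V E A F \<longleftrightarrow> (\<forall>i\<in>V - A. card (in_nbrs E i \<inter> A) \<le> F)"

text \<open>w j is the value g(x^i_j(t)) received by agent i from in-neighbour j,
  and w i = g(x_i(t)) is agent i's own value.  The in-neighbours are sorted by
  received value; removal of the F largest (smallest) values removes the last
  (first) F entries of the sorted list (ties broken arbitrarily, which does not
  affect the resulting sum).\<close>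

definition ftrc_removed :: "(nat \<times> nat) set \<Rightarrow> nat \<Rightarrow> (nat \<Rightarrow> real) \<Rightarrow> nat \<Rightarrow> nat set" where
  "ftrc_removed E F w i =
     (let Vi = in_nbrs E i; c = w i;
          L = sort_key w (sorted_list_of_set Vi);
          big = {j\<in>Vi. w j > c}; small = {j\<in>Vi. w j < c};
          Rbig = (if card big < F then big else set (drop (length L - F) L));
          Rsmall = (if card small < F then small else set (take F L))
      in Rbig \<union> Rsmall)"

definition ftrc_input :: "(nat \<times> nat) set \<Rightarrow> nat \<Rightarrow> real \<Rightarrow> (nat \<Rightarrow> real) \<Rightarrow> nat \<Rightarrow> real" where
  "ftrc_input E F \<alpha> w i =
     \<alpha> * sgn (\<Sum>j\<in>(insert i (in_nbrs E i)) - ftrc_removed E F w i. w j - w i)"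

definition abs_cont_on :: "real set \<Rightarrow> (real \<Rightarrow> real) \<Rightarrow> bool" where
  "abs_cont_on S f \<longleftrightarrow>
     (\<forall>\<epsilon>>0. \<exists>\<delta>>0. \<forall>(K::nat) a b.
        (\<forall>k<K. a k \<le> b k \<and> {a k..b k} \<subseteq> S) \<and>
        (\<forall>k<K. \<forall>l<K. k \<noteq> l \<longrightarrow> {a k<..<b k} \<inter> {a l<..<b l} = {}) \<and>
        (\<Sum>k<K. b k - a k) < \<delta>
        \<longrightarrow> (\<Sum>k<K. \<bar>f (b k) - f (a k)\<bar>) < \<epsilon>)"

text \<open>On the unbounded interval [0,\<infinity>), absolute continuity is understood
  locally: on every compact subinterval.\<close>

definition loc_abs_cont_nonneg :: "(real \<Rightarrow> real) \<Rightarrow> bool" where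
  "loc_abs_cont_nonneg f \<longleftrightarrow> (\<forall>b\<ge>0. abs_cont_on {0..b} f)"

definition received :: "nat set \<Rightarrow> (real \<Rightarrow> real) \<Rightarrow> (nat \<Rightarrow> real \<Rightarrow> real)
    \<Rightarrow> (nat \<Rightarrow> nat \<Rightarrow> real \<Rightarrow> real) \<Rightarrow> real \<Rightarrow> nat \<Rightarrow> nat \<Rightarrow> real" where
  "received N g x xA t i j = (if j \<in> N then g (x j t) else g (xA j i t))"

definition ftrc_trajectory :: "nat set \<Rightarrow> (nat \<times> nat) set \<Rightarrow> nat \<Rightarrow> real \<Rightarrow> nat set
    \<Rightarrow> (real \<Rightarrow> real) \<Rightarrow> (nat \<Rightarrow> nat \<Rightarrow> real \<Rightarrow> real) \<Rightarrow> (nat \<Rightarrow> real \<Rightarrow> real) \<Rightarrow> bool" where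
  "ftrc_trajectory V E F \<alpha> N g xA x \<longleftrightarrow>
     (\<forall>k\<in>N. loc_abs_cont_nonneg (x k)) \<and>
     (\<exists>Z. Z \<in> null_sets lebesgue \<and>
        (\<forall>t\<in>{0..} - Z. \<forall>k\<in>N.
           (x k has_real_derivative ftrc_input E F \<alpha> (received N g x xA t k) k) (at t)))"

end

theory Submission
  imports Defs
begin


lemma tagged_piece:
  assumes "p tagged_division_of {a..b::real}" "(x,k) \<in> p"
  obtains u v where "k = {u..v}" "u \<le> x" "x \<le> v" "a \<le> u" "v \<le> b"
    "Inf k = u" "Sup k = v" "Henstock_Kurzweil_Integration.content k = v - u"
    "interior k = {u<..<v}"
proof -
  obtain u v where k: "k = cbox u v" using tagged_division_ofD(4)[OF assms] by blast
  have xk: "x \<in> k" using tagged_division_ofD(2)[OF assms] .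
  have ks: "k \<subseteq> {a..b}" using tagged_division_ofD(3)[OF assms] .
  have k': "k = {u..v}" using k by (simp add: cbox_interval)
  with xk have uv: "u \<le> x" "x \<le> v" by auto
  with ks k' have "a \<le> u" "v \<le> b" by auto
  with uv k' show ?thesis using that
    by (simp add: content_real interior_atLeastAtMost_real)
qed

lemma sum_abs_tagged_small:
  fixes f :: "real \<Rightarrow> real"
  assumes dAC: "\<And>(K::nat) a' b'. (\<forall>k<K. a' k \<le> b' k \<and> {a' k..b' k} \<subseteq> S) \<Longrightarrow>
        (\<forall>k<K. \<forall>l<K. k \<noteq> l \<longrightarrow> {a' k<..<b' k} \<inter> {a' l<..<b' l} = {}) \<Longrightarrow>
        (\<Sum>k<K. b' k - a' k) < d \<Longrightarrow> (\<Sum>k<K. \<bar>f (b' k) - f (a' k)\<bar>) < e"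
   and q: "q \<subseteq> p" and p: "p tagged_division_of {a..b}" and S: "{a..b} \<subseteq> S"
   and small: "(\<Sum>(x,k)\<in>q. Henstock_Kurzweil_Integration.content k) < d"
  shows "(\<Sum>(x,k)\<in>q. \<bar>f (Sup k) - f (Inf k)\<bar>) < e"
proof -
  have fin: "finite q" using q tagged_division_ofD(1)[OF p] finite_subset by blast
  obtain h where h: "bij_betw h {0..<card q} q" using ex_bij_betw_nat_finite[OF fin] by blast
  define a' where "a' i = Inf (snd (h i))" for i
  define b' where "b' i = Sup (snd (h i))" for i
  have piece: "\<exists>u v. snd (h i) = {u..v} \<and> u \<le> v \<and> a' i = u \<and> b' i = v \<and> {u..v} \<subseteq> S
     \<and> Henstock_Kurzweil_Integration.content (snd (h i)) = v - u \<and> interior (snd (h i)) = {u<..<v}"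
    if i: "i < card q" for i
  proof -
    have hi: "h i \<in> p" using h i q unfolding bij_betw_def by auto
    obtain x k where xk: "h i = (x,k)" by fastforce
    from tagged_piece[OF p hi[unfolded xk]] obtain u v where
      "k = {u..v}" "u \<le> x" "x \<le> v" "a \<le> u" "v \<le> b"
      "Inf k = u" "Sup k = v" "Henstock_Kurzweil_Integration.content k = v - u" "interior k = {u<..<v}" .
    then show ?thesis using S xk unfolding a'_def b'_def by auto
  qed
  have c1: "\<forall>k<card q. a' k \<le> b' k \<and> {a' k..b' k} \<subseteq> S"
    using piece by fastforce
  have c2: "\<forall>k<card q. \<forall>l<card q. k \<noteq> l \<longrightarrow> {a' k<..<b' k} \<inter> {a' l<..<b' l} = {}"
  proof (intro allI impI)
    fix k l assume kl: "k < card q" "l < card q" "k \<noteq> l"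
    have ne: "h k \<noteq> h l" using h kl unfolding bij_betw_def inj_on_def by auto
    have hk: "h k \<in> p" "h l \<in> p" using h kl q unfolding bij_betw_def by auto
    have "interior (snd (h k)) \<inter> interior (snd (h l)) = {}"
      using tagged_division_ofD(5)[OF p, of "fst (h k)" "snd (h k)" "fst (h l)" "snd (h l)"] hk ne
      by auto
    then show "{a' k<..<b' k} \<inter> {a' l<..<b' l} = {}"
      using piece[OF kl(1)] piece[OF kl(2)] by auto
  qed
  have eq1: "(\<Sum>i<card q. b' i - a' i) = (\<Sum>(x,k)\<in>q. Henstock_Kurzweil_Integration.content k)"
  proof -
    have "(\<Sum>i<card q. b' i - a' i) = (\<Sum>i\<in>{0..<card q}. (\<lambda>(x,k). Henstock_Kurzweil_Integration.content k) (h i))"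
      by (rule sum.cong) (use piece in \<open>auto simp: case_prod_beta\<close>)
    also have "\<dots> = (\<Sum>(x,k)\<in>q. Henstock_Kurzweil_Integration.content k)"
      by (rule sum.reindex_bij_betw[OF h])
    finally show ?thesis .
  qed
  have eq2: "(\<Sum>i<card q. \<bar>f (b' i) - f (a' i)\<bar>) = (\<Sum>(x,k)\<in>q. \<bar>f (Sup k) - f (Inf k)\<bar>)"
  proof -
    have "(\<Sum>i<card q. \<bar>f (b' i) - f (a' i)\<bar>) = (\<Sum>i\<in>{0..<card q}. (\<lambda>(x,k). \<bar>f (Sup k) - f (Inf k)\<bar>) (h i))"
      by (rule sum.cong) (auto simp: case_prod_beta a'_def b'_def)
    also have "\<dots> = (\<Sum>(x,k)\<in>q. \<bar>f (Sup k) - f (Inf k)\<bar>)"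
      by (rule sum.reindex_bij_betw[OF h])
    finally show ?thesis .
  qed
  show ?thesis using dAC[of "card q" a' b'] c1 c2 small eq1 eq2 by simp
qed


lemma gauge_bound:
  fixes f :: "real \<Rightarrow> real"
  assumes ab: "a \<le> b" and ac: "abs_cont_on S f" and sub: "{a..b} \<subseteq> S"
    and Z: "negligible Z"
    and loc: "\<And>t e. t \<in> {a..b} \<Longrightarrow> t \<notin> Z \<Longrightarrow> e > 0 \<Longrightarrow>
       \<exists>r>0. \<forall>u v. t - r < u \<longrightarrow> u \<le> t \<longrightarrow> t \<le> v \<longrightarrow> v < t + r \<longrightarrow> f v - f u \<le> (c+e)*(v-u)"
  shows "f b - f a \<le> c*(b-a)"
proof -
  have key: "f b - f a \<le> (c+e)*(b-a) + 2*e" if e: "e > 0" for e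
  proof -
    obtain d where d: "d>0" and dAC: "\<And>(K::nat) a' b'. (\<forall>k<K. a' k \<le> b' k \<and> {a' k..b' k} \<subseteq> S) \<Longrightarrow>
        (\<forall>k<K. \<forall>l<K. k \<noteq> l \<longrightarrow> {a' k<..<b' k} \<inter> {a' l<..<b' l} = {}) \<Longrightarrow>
        (\<Sum>k<K. b' k - a' k) < d \<Longrightarrow> (\<Sum>k<K. \<bar>f (b' k) - f (a' k)\<bar>) < e"
      using ac e unfolding abs_cont_on_def by meson
    define d' where "d' = min d (e / (\<bar>c+e\<bar> + 1))"
    have d'0: "d' > 0" using d e by (simp add: d'_def)
    have d'd: "d' \<le> d" by (simp add: d'_def)
    have d'e: "\<bar>c+e\<bar> * d' \<le> e"
    proof -
      have "\<bar>c+e\<bar> * d' \<le> \<bar>c+e\<bar> * (e / (\<bar>c+e\<bar> + 1))"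
        by (rule mult_left_mono) (auto simp: d'_def)
      also have "\<dots> \<le> e" using e by (simp add: field_simps)
      finally show ?thesis .
    qed
    have "(indicator Z has_integral (0::real)) {a..b}"
      using Z unfolding negligible_def by (metis cbox_interval)
    then obtain \<gamma> where g: "gauge \<gamma>" and gZ: "\<And>p. p tagged_division_of {a..b} \<Longrightarrow> \<gamma> fine p \<Longrightarrow>
        norm ((\<Sum>(x,k)\<in>p. Henstock_Kurzweil_Integration.content k *\<^sub>R (indicator Z x::real)) - 0) < d'"
      using d'0 unfolding has_integral_real by meson
    define P where "P t r \<longleftrightarrow> r > 0 \<and> (\<forall>u v. t - r < u \<longrightarrow> u \<le> t \<longrightarrow> t \<le> v \<longrightarrow> v < t + r \<longrightarrow> f v - f u \<le> (c+e)*(v-u))" for t r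
    define rr where "rr t = (if t \<in> {a..b} \<and> t \<notin> Z then (SOME r. P t r) else 1)" for t
    have rrP: "P t (rr t)" if "t \<in> {a..b}" "t \<notin> Z" for t
    proof -
      have "\<exists>r. P t r" using loc[OF that e] unfolding P_def by blast
      then show ?thesis using that unfolding rr_def by (simp add: someI_ex)
    qed
    have rr0: "rr t > 0" for t
      using rrP[of t] unfolding rr_def P_def by auto
    define \<delta> where "\<delta> t = \<gamma> t \<inter> ball t (rr t)" for t
    have gd: "gauge \<delta>" unfolding \<delta>_def using g rr0 by (intro gauge_Int) (auto simp: gauge_def)
    obtain p where p: "p tagged_division_of {a..b}" and fine: "\<delta> fine p"
      using fine_division_exists[OF gd, of a b] by (metis cbox_interval)
    have fin: "finite p" using p by blast
    have fg: "\<gamma> fine p" and fb: "(\<lambda>t. ball t (rr t)) fine p"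
      using fine unfolding \<delta>_def fine_Int by auto
    define p1 where "p1 = {xk\<in>p. fst xk \<in> Z}"
    have p1p: "p1 \<subseteq> p" by (auto simp: p1_def)
    let ?C = "\<lambda>(x::real,k::real set). Henstock_Kurzweil_Integration.content k"
    let ?D = "\<lambda>(x::real,k::real set). f (Sup k) - f (Inf k)"
    have tot: "sum ?D p = f b - f a" by (rule additive_tagged_division_1[OF ab p])
    have totC: "sum ?C p = b - a"
      using additive_content_tagged_division[of p a b] p ab by (simp add: cbox_interval content_real)
    have C1: "sum ?C p1 < d'"
    proof -
      have "(\<Sum>(x,k)\<in>p. Henstock_Kurzweil_Integration.content k *\<^sub>R (indicator Z x::real)) = sum ?C p1"
        unfolding p1_def using fin by (simp add: sum.inter_filter[symmetric] case_prod_beta indicator_def if_distrib Int_def cong: if_cong)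

      then show ?thesis using gZ[OF p fg] by simp
    qed
    have C1pos: "sum ?C p1 \<ge> 0"
      by (rule sum_nonneg) (auto simp: case_prod_beta)
    have D1: "sum ?D p1 < e"
    proof -
      have "sum ?D p1 \<le> (\<Sum>(x,k)\<in>p1. \<bar>f (Sup k) - f (Inf k)\<bar>)"
        by (rule sum_mono) auto
      also have "\<dots> < e"
        by (rule sum_abs_tagged_small[OF dAC p1p p sub]) (use C1 d'd in auto)
      finally show ?thesis .
    qed
    have D2: "sum ?D (p - p1) \<le> (c+e) * sum ?C (p - p1)"
      unfolding sum_distrib_left
    proof (rule sum_mono)
      fix xk assume xk: "xk \<in> p - p1"
      obtain x k where xkd: "xk = (x,k)" by fastforce
      have xkp: "(x,k) \<in> p" and xZ: "x \<notin> Z" using xk xkd by (auto simp: p1_def)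
      from tagged_piece[OF p xkp] obtain u v where uv: "k = {u..v}" "u \<le> x" "x \<le> v" "a \<le> u" "v \<le> b"
          "Inf k = u" "Sup k = v" "Henstock_Kurzweil_Integration.content k = v - u" by blast
      have "k \<subseteq> ball x (rr x)" using fb xkp unfolding fine_def by auto
      then have "u \<in> ball x (rr x)" "v \<in> ball x (rr x)" using uv by (auto simp del: mem_ball)
      then have "x - rr x < u" "v < x + rr x" by (auto simp: dist_real_def)
      moreover have "P x (rr x)" using rrP[of x] xZ uv by auto
      ultimately have "f v - f u \<le> (c+e)*(v-u)" using uv unfolding P_def by blast
      then show "?D xk \<le> (c+e) * ?C xk" using uv xkd by simp
    qed
    have split: "sum h p = sum h (p - p1) + sum h p1" for h :: "real \<times> real set \<Rightarrow> real"
      by (rule sum.subset_diff[OF p1p fin])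
    have "f b - f a = sum ?D (p - p1) + sum ?D p1" using tot split[of ?D] by simp
    also have "\<dots> \<le> (c+e) * ((b-a) - sum ?C p1) + e"
    proof -
      have eqC: "sum ?C (p - p1) = (b-a) - sum ?C p1" using totC split[of ?C] by linarith
      show ?thesis using D1 D2[unfolded eqC] by linarith
    qed
    also have "(c+e) * ((b-a) - sum ?C p1) = (c+e)*(b-a) - (c+e) * sum ?C p1" by (simp add: right_diff_distrib)
    also have "- ((c+e) * sum ?C p1) \<le> \<bar>c+e\<bar> * d'"
    proof -
      have "- ((c+e) * sum ?C p1) \<le> \<bar>c+e\<bar> * sum ?C p1"
        using C1pos by (metis abs_ge_minus_self minus_mult_left mult_right_mono)
      also have "\<dots> \<le> \<bar>c+e\<bar> * d'" using C1 by (intro mult_left_mono) auto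
      finally show ?thesis .
    qed
    then have "(c+e)*(b-a) - (c+e) * sum ?C p1 + e \<le> (c+e)*(b-a) + 2*e" using d'e by linarith
    finally show ?thesis by linarith
  qed
  show ?thesis
  proof (rule field_le_epsilon)
    fix e :: real assume e: "e > 0"
    define e' where "e' = e / (b - a + 2)"
    have e'0: "e' > 0" using e ab by (simp add: e'_def)
    have ee: "e' * (b - a + 2) = e" using ab by (simp add: e'_def)
    have "(c+e')*(b-a) + 2*e' = c*(b-a) + e' * (b - a + 2)" by (simp add: distrib_left distrib_right)
    then show "f b - f a \<le> c * (b - a) + e" using key[OF e'0] ee by linarith
  qed
qed



lemma sorted_split_le:
  fixes w :: "nat \<Rightarrow> real"
  assumes "sorted (map w L)" "j \<in> set (take m L)" "d \<in> set (drop m L)"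
  shows "w j \<le> w d"
proof -
  have "sorted (map w (take m L) @ map w (drop m L))" using assms(1)
    by (metis append_take_drop_id map_append)
  then show ?thesis using assms(2,3) by (auto simp: sorted_append)
qed

lemma ftrc_parts:
  fixes w :: "nat \<Rightarrow> real"
  assumes fin: "finite (in_nbrs E i)"
  defines "Vi \<equiv> in_nbrs E i"
  defines "big \<equiv> {j\<in>Vi. w j > w i}" and "small \<equiv> {j\<in>Vi. w j < w i}"
  obtains Rb Rs where "ftrc_removed E F w i = Rb \<union> Rs" "Rb \<subseteq> big" "Rs \<subseteq> small"
    "card big \<le> F \<Longrightarrow> Rb = big" "card small \<le> F \<Longrightarrow> Rs = small" "card Rb \<le> F" "card Rs \<le> F"
proof -
  define c where "c = w i"
  define L where "L = sort_key w (sorted_list_of_set Vi)"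
  have L: "distinct L" "set L = Vi" "length L = card Vi" "sorted (map w L)"
    unfolding L_def using fin Vi_def
    by (auto simp: distinct_card[symmetric])
  define K where "K = length L"
  define Rb where "Rb = (if card big < F then big else set (drop (length L - F) L))"
  define Rs where "Rs = (if card small < F then small else set (take F L))"
  have rem: "ftrc_removed E F w i = Rb \<union> Rs"
    unfolding ftrc_removed_def Let_def Rb_def Rs_def L_def big_def small_def Vi_def by simp
  have finb: "finite big" "finite small" using fin unfolding big_def small_def Vi_def by auto
  have bigK: "card big \<le> length L" "card small \<le> length L"
    using L fin unfolding big_def small_def Vi_def by (auto intro: card_mono)
  have cardD: "card (set (drop (length L - F) L)) = min F (length L)"
    using L by (simp add: distinct_card)
  have cardT: "card (set (take F L)) = min F (length L)"
    using L by (simp add: distinct_card)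
  have Rb_big: "Rb \<subseteq> big"
  proof (cases "card big < F")
    case True then show ?thesis by (simp add: Rb_def)
  next
    case False
    then have FK: "F \<le> length L" using bigK by simp
    show ?thesis
    proof
      fix d assume dR: "d \<in> Rb"
      then have dD: "d \<in> set (drop (length L - F) L)" using False by (simp add: Rb_def)
      show "d \<in> big"
      proof (rule ccontr)
        assume nd: "d \<notin> big"
        have dV: "d \<in> Vi" using dD L by (meson in_set_dropD)
        then have wd: "w d \<le> w i" using nd by (auto simp: big_def)
        have "big \<subseteq> set (drop (length L - F) L) - {d}"
        proof
          fix j assume jb: "j \<in> big"
          then have jV: "j \<in> set L" and wj: "w j > w i" using L by (auto simp: big_def)
          have "j \<notin> set (take (length L - F) L)"
            using sorted_split_le[OF L(4) _ dD, of j] wj wd by auto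
          then have "j \<in> set (drop (length L - F) L)" using jV
            by (metis Un_iff append_take_drop_id set_append)
          then show "j \<in> set (drop (length L - F) L) - {d}" using jb nd by auto
        qed
        then have "card big \<le> card (set (drop (length L - F) L) - {d})"
          by (intro card_mono) auto
        also have "\<dots> = F - 1" using dD cardD FK by simp
        moreover have "F \<noteq> 0" using dD cardD FK by (metis card_0_eq empty_iff finite_set min.absorb1)
        ultimately show False using False by linarith
      qed
    qed
  qed
  have Rs_small: "Rs \<subseteq> small"
  proof (cases "card small < F")
    case True then show ?thesis by (simp add: Rs_def)
  next
    case False
    then have FK: "F \<le> length L" using bigK by simp
    show ?thesis
    proof
      fix d assume dR: "d \<in> Rs"
      then have dD: "d \<in> set (take F L)" using False by (simp add: Rs_def)
      show "d \<in> small"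
      proof (rule ccontr)
        assume nd: "d \<notin> small"
        have dV: "d \<in> Vi" using dD L by (meson in_set_takeD)
        then have wd: "w d \<ge> w i" using nd by (auto simp: small_def)
        have "small \<subseteq> set (take F L) - {d}"
        proof
          fix j assume jb: "j \<in> small"
          then have jV: "j \<in> set L" and wj: "w j < w i" using L by (auto simp: small_def)
          have "j \<notin> set (drop F L)"
            using sorted_split_le[OF L(4) dD, of j] wj wd by auto
          then have "j \<in> set (take F L)" using jV
            by (metis Un_iff append_take_drop_id set_append)
          then show "j \<in> set (take F L) - {d}" using jb nd by auto
        qed
        then have "card small \<le> card (set (take F L) - {d})"
          by (intro card_mono) auto
        also have "\<dots> = F - 1" using dD cardT FK by simp
        moreover have "F \<noteq> 0" using dD cardT FK by (metis card_0_eq empty_iff finite_set min.absorb1)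
        ultimately show False using False by linarith
      qed
    qed
  qed
  have b1: "Rb = big" if "card big \<le> F"
  proof (cases "card big < F")
    case True then show ?thesis by (simp add: Rb_def)
  next
    case False
    then have "card big = F" "F \<le> length L" using that bigK by auto
    then have "card Rb = card big" using False cardD by (simp add: Rb_def)
    then show ?thesis using Rb_big finb by (simp add: card_subset_eq)
  qed
  have s1: "Rs = small" if "card small \<le> F"
  proof (cases "card small < F")
    case True then show ?thesis by (simp add: Rs_def)
  next
    case False
    then have "card small = F" "F \<le> length L" using that bigK by auto
    then have "card Rs = card small" using False cardT by (simp add: Rs_def)
    then show ?thesis using Rs_small finb by (simp add: card_subset_eq)
  qed
  have cb: "card Rb \<le> F" using cardD by (simp add: Rb_def)
  have cs: "card Rs \<le> F" using cardT by (simp add: Rs_def)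
  show ?thesis using that[OF rem Rb_big Rs_small b1 s1 cb cs] .
qed


lemma input_top:
  fixes w :: "nat \<Rightarrow> real"
  assumes fin: "finite (in_nbrs E i)" and al: "\<alpha> > 0"
    and big: "card {j\<in>in_nbrs E i. w j > w i} \<le> F"
  shows "ftrc_input E F \<alpha> w i \<le> 0"
    and "P \<subseteq> in_nbrs E i \<Longrightarrow> F < card P \<Longrightarrow> (\<forall>p\<in>P. w p < w i) \<Longrightarrow> ftrc_input E F \<alpha> w i = -\<alpha>"
proof -
  obtain Rb Rs where R0: "ftrc_removed E F w i = Rb \<union> Rs" "Rb \<subseteq> {j\<in>in_nbrs E i. w j > w i}"
      "Rs \<subseteq> {j\<in>in_nbrs E i. w j < w i}"
      "card {j\<in>in_nbrs E i. w j > w i} \<le> F \<Longrightarrow> Rb = {j\<in>in_nbrs E i. w j > w i}"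
      "card {j\<in>in_nbrs E i. w j < w i} \<le> F \<Longrightarrow> Rs = {j\<in>in_nbrs E i. w j < w i}"
      "card Rb \<le> F" "card Rs \<le> F"
    by (rule ftrc_parts[OF fin, of F w]) blast
  note R = R0(1-3) R0(4)[OF big] R0(6,7)
  define S where "S = insert i (in_nbrs E i) - ftrc_removed E F w i"
  have finS: "finite S" using fin by (simp add: S_def)
  have le: "\<forall>j\<in>S. w j - w i \<le> 0" using R by (auto simp: S_def)
  then have sle: "(\<Sum>j\<in>S. w j - w i) \<le> 0" by (simp add: sum_nonpos)
  show "ftrc_input E F \<alpha> w i \<le> 0"
    unfolding ftrc_input_def S_def[symmetric] using sle al
    by (simp add: mult_nonneg_nonpos sgn_if)
  assume P: "P \<subseteq> in_nbrs E i" "F < card P" "\<forall>p\<in>P. w p < w i"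
  have "\<not> P \<subseteq> Rs"
  proof
    assume "P \<subseteq> Rs"
    moreover have "finite Rs" using R(3) fin by (auto intro: finite_subset)
    ultimately have "card P \<le> card Rs" by (rule card_mono[rotated])
    then show False using P R by linarith
  qed
  then obtain p where pP: "p \<in> P" "p \<notin> Rs" by blast
  have pS: "p \<in> S" using pP P R by (auto simp: S_def)
  have "(\<Sum>j\<in>S. w j - w i) = (w p - w i) + (\<Sum>j\<in>S - {p}. w j - w i)"
    using finS pS by (simp add: sum.remove)
  also have "(\<Sum>j\<in>S - {p}. w j - w i) \<le> 0" using le by (intro sum_nonpos) auto
  finally have "(\<Sum>j\<in>S. w j - w i) < 0" using pP P by fastforce
  then show "ftrc_input E F \<alpha> w i = -\<alpha>"
    unfolding ftrc_input_def S_def[symmetric] by simp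
qed

lemma input_bot:
  fixes w :: "nat \<Rightarrow> real"
  assumes fin: "finite (in_nbrs E i)" and al: "\<alpha> > 0"
    and small: "card {j\<in>in_nbrs E i. w j < w i} \<le> F"
  shows "ftrc_input E F \<alpha> w i \<ge> 0"
    and "P \<subseteq> in_nbrs E i \<Longrightarrow> F < card P \<Longrightarrow> (\<forall>p\<in>P. w p > w i) \<Longrightarrow> ftrc_input E F \<alpha> w i = \<alpha>"
proof -
  obtain Rb Rs where R0: "ftrc_removed E F w i = Rb \<union> Rs" "Rb \<subseteq> {j\<in>in_nbrs E i. w j > w i}"
      "Rs \<subseteq> {j\<in>in_nbrs E i. w j < w i}"
      "card {j\<in>in_nbrs E i. w j > w i} \<le> F \<Longrightarrow> Rb = {j\<in>in_nbrs E i. w j > w i}"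
      "card {j\<in>in_nbrs E i. w j < w i} \<le> F \<Longrightarrow> Rs = {j\<in>in_nbrs E i. w j < w i}"
      "card Rb \<le> F" "card Rs \<le> F"
    by (rule ftrc_parts[OF fin, of F w]) blast
  note R = R0(1-3) R0(5)[OF small] R0(6,7)
  define S where "S = insert i (in_nbrs E i) - ftrc_removed E F w i"
  have finS: "finite S" using fin by (simp add: S_def)
  have le: "\<forall>j\<in>S. w j - w i \<ge> 0" using R by (auto simp: S_def)
  then have sle: "(\<Sum>j\<in>S. w j - w i) \<ge> 0" by (simp add: sum_nonneg)
  show "ftrc_input E F \<alpha> w i \<ge> 0"
    unfolding ftrc_input_def S_def[symmetric] using sle al
    by (simp add: sgn_if)
  assume P: "P \<subseteq> in_nbrs E i" "F < card P" "\<forall>p\<in>P. w p > w i"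
  have "\<not> P \<subseteq> Rb"
  proof
    assume "P \<subseteq> Rb"
    moreover have "finite Rb" using R(2) fin by (auto intro: finite_subset)
    ultimately have "card P \<le> card Rb" by (rule card_mono[rotated])
    then show False using P R by linarith
  qed
  then obtain p where pP: "p \<in> P" "p \<notin> Rb" by blast
  have pS: "p \<in> S" using pP P R by (auto simp: S_def)
  have e1: "(\<Sum>j\<in>S. w j - w i) = (w p - w i) + (\<Sum>j\<in>S - {p}. w j - w i)"
    using finS pS by (simp add: sum.remove)
  have e2: "(\<Sum>j\<in>S - {p}. w j - w i) \<ge> 0" using le by (intro sum_nonneg) auto
  have "w p > w i" using pP P by blast
  then have "(\<Sum>j\<in>S. w j - w i) > 0" using e1 e2 by linarith
  then show "ftrc_input E F \<alpha> w i = \<alpha>"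
    unfolding ftrc_input_def S_def[symmetric] by simp
qed

lemma input_vals: "ftrc_input E F \<alpha> w i \<in> {-\<alpha>, 0, \<alpha>}"
  unfolding ftrc_input_def by (simp add: sgn_if)



lemma deriv_ev:
  fixes f :: "real \<Rightarrow> real"
  assumes d: "(f has_real_derivative u) (at t)" and e: "e > 0"
  shows "eventually (\<lambda>s. \<bar>f s - f t - u*(s-t)\<bar> \<le> e*\<bar>s-t\<bar>) (at t)"
proof -
  have "((\<lambda>y. (f y - f t)/(y - t)) \<longlongrightarrow> u) (at t)"
    using d by (simp add: has_field_derivative_iff)
  then have ev: "eventually (\<lambda>s. dist ((f s - f t)/(s - t)) u < e) (at t)"
    using e by (rule tendstoD)
  have ne: "eventually (\<lambda>s. s \<noteq> t) (at t)" by (simp add: eventually_at_filter)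
  show ?thesis using ev ne
  proof eventually_elim
    case (elim s)
    then have st: "s - t \<noteq> 0" by simp
    have "f s - f t - u*(s-t) = ((f s - f t)/(s-t) - u) * (s-t)" using st by (simp add: field_simps)
    then have "\<bar>f s - f t - u*(s-t)\<bar> = \<bar>(f s - f t)/(s-t) - u\<bar> * \<bar>s-t\<bar>" by (simp add: abs_mult)
    also have "\<dots> \<le> e * \<bar>s-t\<bar>" using elim(1) by (intro mult_right_mono) (auto simp: dist_real_def)
    finally show ?case .
  qed
qed

lemma deriv_right:
  fixes f :: "real \<Rightarrow> real"
  assumes d: "(f has_real_derivative u) (at t)" and e: "e > 0"
  shows "eventually (\<lambda>s. f s \<le> f t + (u+e)*(s-t)) (at_right t)"
proof -
  have "eventually (\<lambda>s. \<bar>f s - f t - u*(s-t)\<bar> \<le> e*\<bar>s-t\<bar>) (at_right t)"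
    using deriv_ev[OF d e] eventually_at_split by blast
  then show ?thesis using eventually_at_right_less[of t]
    by eventually_elim (auto simp: algebra_simps abs_if split: if_splits)
qed

lemma deriv_left:
  fixes f :: "real \<Rightarrow> real"
  assumes d: "(f has_real_derivative u) (at t)" and e: "e > 0"
  shows "eventually (\<lambda>s. f t + (u+e)*(s-t) \<le> f s) (at_left t)"
proof -
  have "eventually (\<lambda>s. \<bar>f s - f t - u*(s-t)\<bar> \<le> e*\<bar>s-t\<bar>) (at_left t)"
    using deriv_ev[OF d e] eventually_at_split by blast
  moreover have "eventually (\<lambda>s. s < t) (at_left t)" by (simp add: eventually_at_filter)
  ultimately show ?thesis
    by eventually_elim (auto simp: algebra_simps abs_if split: if_splits)
qed

lemma cont_below_right:
  fixes f :: "real \<Rightarrow> real"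
  assumes d: "(f has_real_derivative u) (at t)" and lt: "f t < K"
  shows "eventually (\<lambda>s. f s \<le> K + c*(s-t)) (at t)"
proof -
  have cont: "isCont f t" using d by (rule DERIV_isCont)
  have "((\<lambda>s. K + c*(s-t) - f s) \<longlongrightarrow> K + c*(t-t) - f t) (at t)"
    using cont unfolding isCont_def by (intro tendsto_intros) auto
  then have "eventually (\<lambda>s. 0 < K + c*(s-t) - f s) (at t)"
    using lt by (intro order_tendstoD(1)) auto
  then show ?thesis by eventually_elim auto
qed

lemma loc_from_ev:
  fixes f :: "real \<Rightarrow> real"
  assumes r: "eventually (\<lambda>s. f s \<le> f t + C*(s-t)) (at_right t)"
    and l: "eventually (\<lambda>s. f t + C*(s-t) \<le> f s) (at_left t)"
  shows "\<exists>r>0. \<forall>u v. t - r < u \<longrightarrow> u \<le> t \<longrightarrow> t \<le> v \<longrightarrow> v < t + r \<longrightarrow> f v - f u \<le> C*(v-u)"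
proof -
  obtain b1 where b1: "b1 > t" "\<forall>y>t. y < b1 \<longrightarrow> f y \<le> f t + C*(y-t)"
    using r unfolding eventually_at_right_field by blast
  obtain b2 where b2: "b2 < t" "\<forall>y>b2. y < t \<longrightarrow> f t + C*(y-t) \<le> f y"
    using l unfolding eventually_at_left_field by blast
  define r where "r = min (b1 - t) (t - b2)"
  have "r > 0" using b1 b2 by (simp add: r_def)
  moreover have "f v - f u \<le> C*(v-u)" if "t - r < u" "u \<le> t" "t \<le> v" "v < t + r" for u v
  proof -
    have 1: "f v \<le> f t + C*(v-t)"
      using b1 that by (cases "v = t") (auto simp: r_def)
    have 2: "f t + C*(u-t) \<le> f u"
      using b2 that by (cases "u = t") (auto simp: r_def)
    have "C*(v-u) = C*(v-t) - C*(u-t)" by (simp add: algebra_simps)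
    then show ?thesis using 1 2 by linarith
  qed
  ultimately show ?thesis by blast
qed

lemma countable_strict_locmin:
  fixes h :: "real \<Rightarrow> real"
  shows "countable {t. \<exists>r>0. \<forall>s. s \<noteq> t \<and> \<bar>s - t\<bar> < r \<longrightarrow> h t < h s}"
proof -
  define B where "B q = {t. fst q < t \<and> t < snd q \<and> (\<forall>s. s \<noteq> t \<and> fst q < s \<and> s < snd q \<longrightarrow> h t < h s)}" for q :: "real \<times> real"
  have sub: "{t. \<exists>r>0. \<forall>s. s \<noteq> t \<and> \<bar>s - t\<bar> < r \<longrightarrow> h t < h s} \<subseteq> (\<Union>q\<in>\<rat>\<times>\<rat>. B q)"
  proof
    fix t assume "t \<in> {t. \<exists>r>0. \<forall>s. s \<noteq> t \<and> \<bar>s - t\<bar> < r \<longrightarrow> h t < h s}"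
    then obtain r where r: "r > 0" "\<forall>s. s \<noteq> t \<and> \<bar>s - t\<bar> < r \<longrightarrow> h t < h s" by blast
    obtain q1 where q1: "q1 \<in> \<rat>" "t - r < q1" "q1 < t" using Rats_dense_in_real[of "t - r" t] r by auto
    obtain q2 where q2: "q2 \<in> \<rat>" "t < q2" "q2 < t + r" using Rats_dense_in_real[of t "t + r"] r by auto
    have "t \<in> B (q1, q2)" using q1 q2 r unfolding B_def by (auto simp: abs_if)
    then show "t \<in> (\<Union>q\<in>\<rat>\<times>\<rat>. B q)" using q1 q2 by blast
  qed
  have "countable (B q)" for q
  proof (cases "B q = {}")
    case False
    then obtain t where t: "t \<in> B q" by blast
    have "B q \<subseteq> {t}"
    proof
      fix t' assume t': "t' \<in> B q"
      show "t' \<in> {t}"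
      proof (rule ccontr)
        assume "t' \<notin> {t}"
        then have "h t < h t'" "h t' < h t" using t t' unfolding B_def by auto
        then show False by simp
      qed
    qed
    then show ?thesis using countable_subset by blast
  qed simp
  moreover have "countable (\<rat> \<times> (\<rat>::real set))" by (rule countable_SIGMA) (simp_all add: countable_rat)
  ultimately have "countable (\<Union>q\<in>\<rat>\<times>\<rat>. B q)" by (intro countable_UN) auto
  then show ?thesis using sub countable_subset by blast
qed


lemma top_right:
  fixes y :: "nat \<Rightarrow> real \<Rightarrow> real"
  assumes fin: "finite N" and ne: "N \<noteq> {}"
    and d: "\<And>j. j \<in> N \<Longrightarrow> (y j has_real_derivative u j) (at t)"
    and c: "\<And>j. j \<in> N \<Longrightarrow> y j t = Max ((\<lambda>j. y j t) ` N) \<Longrightarrow> u j \<le> c"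
    and e: "e > 0"
  shows "eventually (\<lambda>s. Max ((\<lambda>j. y j s) ` N) \<le> Max ((\<lambda>j. y j t) ` N) + (c+e)*(s-t)) (at_right t)"
proof -
  let ?M = "Max ((\<lambda>j. y j t) ` N)"
  have "\<forall>j\<in>N. eventually (\<lambda>s. y j s \<le> ?M + (c+e)*(s-t)) (at_right t)"
  proof
    fix j assume j: "j \<in> N"
    have le: "y j t \<le> ?M" using fin j by (intro Max_ge) auto
    show "eventually (\<lambda>s. y j s \<le> ?M + (c+e)*(s-t)) (at_right t)"
    proof (cases "y j t = ?M")
      case True
      have uc: "u j \<le> c" using c[OF j True] .
      show ?thesis using deriv_right[OF d[OF j] e] eventually_at_right_less[of t]
      proof eventually_elim
        case (elim s)
        have "(u j + e)*(s-t) \<le> (c+e)*(s-t)" using uc elim(2) by (intro mult_right_mono) auto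
        then show ?case using elim(1) True by linarith
      qed
    next
      case False
      then have "y j t < ?M" using le by simp
      from cont_below_right[OF d[OF j] this, of "c+e"] show ?thesis
        using eventually_at_split by blast
    qed
  qed
  then have "eventually (\<lambda>s. \<forall>j\<in>N. y j s \<le> ?M + (c+e)*(s-t)) (at_right t)"
    using fin by (rule eventually_ball_finite[rotated])
  then show ?thesis
    by eventually_elim (use fin ne in auto)
qed

lemma top_left:
  fixes y :: "nat \<Rightarrow> real \<Rightarrow> real"
  assumes fin: "finite N"
    and d: "(y i has_real_derivative u) (at t)"
    and i: "i \<in> N" "y i t = Max ((\<lambda>j. y j t) ` N)" and c: "u \<le> c"
    and e: "e > 0"
  shows "eventually (\<lambda>s. Max ((\<lambda>j. y j t) ` N) + (c+e)*(s-t) \<le> Max ((\<lambda>j. y j s) ` N)) (at_left t)"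
proof -
  have "eventually (\<lambda>s. s < t) (at_left t)" by (simp add: eventually_at_filter)
  with deriv_left[OF d e] show ?thesis
  proof eventually_elim
    case (elim s)
    have "(c+e)*(s-t) \<le> (u + e)*(s-t)" using c elim(2) by (intro mult_right_mono_neg) auto
    moreover have "y i s \<le> Max ((\<lambda>j. y j s) ` N)" using fin i by (intro Max_ge) auto
    ultimately show ?case using elim(1) i by linarith
  qed
qed

lemma top_strict:
  fixes y :: "nat \<Rightarrow> real \<Rightarrow> real"
  assumes fin: "finite N"
    and di: "(y i has_real_derivative ui) (at t)" and dj: "(y j has_real_derivative uj) (at t)"
    and i: "i \<in> N" "y i t = Max ((\<lambda>j. y j t) ` N)"
    and j: "j \<in> N" "y j t = Max ((\<lambda>j. y j t) ` N)"
    and b: "\<beta> > 0" "ui \<le> -\<beta>" "uj \<ge> 0"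
  shows "\<exists>r>0. \<forall>s. s \<noteq> t \<and> \<bar>s - t\<bar> < r \<longrightarrow>
     Max ((\<lambda>j. y j t) ` N) + \<beta>/2*t < Max ((\<lambda>j. y j s) ` N) + \<beta>/2 * s"
proof -
  let ?M = "\<lambda>s. Max ((\<lambda>j. y j s) ` N)"
  have b4: "\<beta>/4 > 0" using b by simp
  have "eventually (\<lambda>s. \<bar>y i s - y i t - ui*(s-t)\<bar> \<le> \<beta>/4*\<bar>s-t\<bar> \<and> \<bar>y j s - y j t - uj*(s-t)\<bar> \<le> \<beta>/4*\<bar>s-t\<bar>) (at t)"
    using deriv_ev[OF di b4] deriv_ev[OF dj b4] by (rule eventually_conj)
  then obtain r where r: "r > 0" and rr: "\<And>s. s \<noteq> t \<Longrightarrow> dist s t < r \<Longrightarrow>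
      \<bar>y i s - y i t - ui*(s-t)\<bar> \<le> \<beta>/4*\<bar>s-t\<bar> \<and> \<bar>y j s - y j t - uj*(s-t)\<bar> \<le> \<beta>/4*\<bar>s-t\<bar>"
    unfolding eventually_at by auto
  have "?M t + \<beta>/2*t < ?M s + \<beta>/2 * s" if s: "s \<noteq> t" "\<bar>s - t\<bar> < r" for s
  proof -
    have bd: "\<bar>y i s - y i t - ui*(s-t)\<bar> \<le> \<beta>/4*\<bar>s-t\<bar>" "\<bar>y j s - y j t - uj*(s-t)\<bar> \<le> \<beta>/4*\<bar>s-t\<bar>"
      using rr[of s] s by (auto simp: dist_real_def)
    have Mi: "y i s \<le> ?M s" "y j s \<le> ?M s" using fin i j by (auto intro: Max_ge)
    show ?thesis
    proof (cases "s > t")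
      case True
      have "uj*(s-t) \<ge> 0" using b True by simp
      then have "y j s \<ge> ?M t - \<beta>/4*(s-t)" using bd(2) j True by (auto simp: abs_if split: if_splits)
      moreover have "\<beta> * s - \<beta> * t > 0" using b True by (simp add: algebra_simps)
      moreover have "\<beta>/4*(s-t) = (\<beta> * s - \<beta> * t)/4" "\<beta>/4*(t-s) = (\<beta> * t - \<beta> * s)/4"
        "\<beta>*(t-s) = \<beta> * t - \<beta> * s"
        "\<beta>/2*t = (\<beta> * t)/2" "\<beta>/2 * s = (\<beta> * s)/2" by (simp_all add: algebra_simps)
      ultimately show ?thesis using Mi by (simp add: field_simps)
    next
      case False
      then have st: "s < t" using s by simp
      have "ui*(s-t) = (-ui)*(t-s)" by (simp add: algebra_simps)
      also have "\<dots> \<ge> \<beta>*(t-s)" using b st by (intro mult_right_mono) auto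
      finally have "ui*(s-t) \<ge> \<beta>*(t-s)" .
      then have "y i s \<ge> ?M t + \<beta>*(t-s) - \<beta>/4*(t-s)" using bd(1) i st by (auto simp: abs_if split: if_splits)
      moreover have "\<beta> * t - \<beta> * s > 0" using b st by (simp add: algebra_simps)
      moreover have "\<beta>/4*(s-t) = (\<beta> * s - \<beta> * t)/4" "\<beta>/4*(t-s) = (\<beta> * t - \<beta> * s)/4"
        "\<beta>*(t-s) = \<beta> * t - \<beta> * s"
        "\<beta>/2*t = (\<beta> * t)/2" "\<beta>/2 * s = (\<beta> * s)/2" by (simp_all add: algebra_simps)
      ultimately show ?thesis using Mi by (simp add: field_simps)
    qed
  qed
  then show ?thesis using r by blast
qed



lemma ac_dominated:
  fixes f :: "nat \<Rightarrow> real \<Rightarrow> real" and h :: "real \<Rightarrow> real"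
  assumes fin: "finite N" and ac: "\<forall>j\<in>N. abs_cont_on S (f j)" and C: "C \<ge> 0"
    and dom: "\<And>a b. a \<in> S \<Longrightarrow> b \<in> S \<Longrightarrow> \<bar>h b - h a\<bar> \<le> C * (\<Sum>j\<in>N. \<bar>f j b - f j a\<bar>)"
  shows "abs_cont_on S h"
  unfolding abs_cont_on_def
proof (intro allI impI)
  fix e :: real assume e: "e > 0"
  define e' where "e' = e / (C * card N + 1)"
  have pos: "C * card N + 1 > 0" using C by (simp add: add_nonneg_pos)
  have e'0: "e' > 0" using e pos by (simp add: e'_def)
  have e'e: "C * card N * e' < e"
  proof -
    have "e' * (C * card N + 1) = e" using pos by (simp add: e'_def)
    then have "C * card N * e' = e - e'" by (simp add: algebra_simps)
    then show ?thesis using e'0 by linarith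
  qed
  have ex: "\<forall>j\<in>N. \<exists>d>0. \<forall>(K::nat) a b. (\<forall>k<K. a k \<le> b k \<and> {a k..b k} \<subseteq> S) \<and>
        (\<forall>k<K. \<forall>l<K. k \<noteq> l \<longrightarrow> {a k<..<b k} \<inter> {a l<..<b l} = {}) \<and>
        (\<Sum>k<K. b k - a k) < d \<longrightarrow> (\<Sum>k<K. \<bar>f j (b k) - f j (a k)\<bar>) < e'"
    using ac e'0 unfolding abs_cont_on_def by blast
  obtain dd where dd: "\<forall>j\<in>N. dd j > 0 \<and> (\<forall>(K::nat) a b. (\<forall>k<K. a k \<le> b k \<and> {a k..b k} \<subseteq> S) \<and>
        (\<forall>k<K. \<forall>l<K. k \<noteq> l \<longrightarrow> {a k<..<b k} \<inter> {a l<..<b l} = {}) \<and>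
        (\<Sum>k<K. b k - a k) < dd j \<longrightarrow> (\<Sum>k<K. \<bar>f j (b k) - f j (a k)\<bar>) < e')"
    using bchoice[OF ex] by (elim exE) assumption
  define \<delta> where "\<delta> = Min (insert 1 (dd ` N))"
  have \<delta>0: "\<delta> > 0" using dd fin by (auto simp: \<delta>_def)
  have \<delta>le: "\<delta> \<le> dd j" if "j \<in> N" for j using fin that by (auto simp: \<delta>_def)
  show "\<exists>d>0. \<forall>(K::nat) a b. (\<forall>k<K. a k \<le> b k \<and> {a k..b k} \<subseteq> S) \<and>
        (\<forall>k<K. \<forall>l<K. k \<noteq> l \<longrightarrow> {a k<..<b k} \<inter> {a l<..<b l} = {}) \<and>
        (\<Sum>k<K. b k - a k) < d \<longrightarrow> (\<Sum>k<K. \<bar>h (b k) - h (a k)\<bar>) < e"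
  proof (intro exI conjI allI impI)
    show "\<delta> > 0" by (rule \<delta>0)
    fix K :: nat and a b :: "nat \<Rightarrow> real"
    assume H: "(\<forall>k<K. a k \<le> b k \<and> {a k..b k} \<subseteq> S) \<and>
        (\<forall>k<K. \<forall>l<K. k \<noteq> l \<longrightarrow> {a k<..<b k} \<inter> {a l<..<b l} = {}) \<and>
        (\<Sum>k<K. b k - a k) < \<delta>"
    have each: "(\<Sum>k<K. \<bar>f j (b k) - f j (a k)\<bar>) < e'" if j: "j \<in> N" for j
      using dd j H \<delta>le[OF j] by (meson order_less_le_trans)
    have "(\<Sum>k<K. \<bar>h (b k) - h (a k)\<bar>) \<le> (\<Sum>k<K. C * (\<Sum>j\<in>N. \<bar>f j (b k) - f j (a k)\<bar>))"
    proof (rule sum_mono)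
      fix k assume "k \<in> {..<K}"
      then have "a k \<le> b k \<and> {a k..b k} \<subseteq> S" using H by auto
      then have "a k \<in> S" "b k \<in> S" by auto
      then show "\<bar>h (b k) - h (a k)\<bar> \<le> C * (\<Sum>j\<in>N. \<bar>f j (b k) - f j (a k)\<bar>)" by (rule dom)
    qed
    also have "\<dots> = C * (\<Sum>j\<in>N. \<Sum>k<K. \<bar>f j (b k) - f j (a k)\<bar>)"
      by (simp add: sum_distrib_left[symmetric] sum.swap[of _ _ N])
    also have "\<dots> \<le> C * (card N * e')"
    proof (rule mult_left_mono[OF _ C])
      show "(\<Sum>j\<in>N. \<Sum>k<K. \<bar>f j (b k) - f j (a k)\<bar>) \<le> card N * e'"
        using sum_bounded_above[of N "\<lambda>j. \<Sum>k<K. \<bar>f j (b k) - f j (a k)\<bar>" e'] each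
        by (simp add: less_imp_le)
    qed
    also have "\<dots> < e" using e'e by (simp add: mult.assoc)
    finally show "(\<Sum>k<K. \<bar>h (b k) - h (a k)\<bar>) < e" .
  qed
qed

lemma Max_diff_le:
  fixes f g :: "nat \<Rightarrow> real"
  assumes fin: "finite N" and ne: "N \<noteq> {}"
  shows "\<bar>Max (f ` N) - Max (g ` N)\<bar> \<le> (\<Sum>j\<in>N. \<bar>f j - g j\<bar>)"
proof -
  have "Max (f ` N) \<in> f ` N" "Max (g ` N) \<in> g ` N" using fin ne by auto
  then obtain j1 j2 where j1: "j1 \<in> N" "Max (f ` N) = f j1" and j2: "j2 \<in> N" "Max (g ` N) = g j2" by auto
  have "g j1 \<le> Max (g ` N)" "f j2 \<le> Max (f ` N)" using fin j1(1) j2(1) by auto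
  moreover have "\<bar>f j1 - g j1\<bar> \<le> (\<Sum>j\<in>N. \<bar>f j - g j\<bar>)" "\<bar>f j2 - g j2\<bar> \<le> (\<Sum>j\<in>N. \<bar>f j - g j\<bar>)"
    using fin j1 j2 by (auto intro!: member_le_sum)
  ultimately show ?thesis using j1 j2 unfolding abs_le_iff by linarith
qed



lemma Min_neg:
  fixes f :: "nat \<Rightarrow> real"
  assumes "finite N" "N \<noteq> {}"
  shows "Min (f ` N) = - Max ((\<lambda>j. - f j) ` N)"
proof -
  have m: "Min (f ` N) \<in> f ` N" using assms by auto
  have "Max ((\<lambda>j. - f j) ` N) = - Min (f ` N)"
  proof (rule Max_eqI)
    show "finite ((\<lambda>j. - f j) ` N)" using assms by auto
    show "y \<le> - Min (f ` N)" if "y \<in> (\<lambda>j. - f j) ` N" for y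
      using that assms by auto
    show "- Min (f ` N) \<in> (\<lambda>j. - f j) ` N" using m by auto
  qed
  then show ?thesis by simp
qed

lemma comb_facts:
  fixes n F :: nat and \<alpha> :: real and E :: "(nat \<times> nat) set"
    and N A :: "nat set" and g :: "real \<Rightarrow> real"
    and xA :: "nat \<Rightarrow> nat \<Rightarrow> real \<Rightarrow> real" and x :: "nat \<Rightarrow> real \<Rightarrow> real" and t :: real and k :: nat
  assumes E: "E \<subseteq> {1..n} \<times> {1..n}"
    and part: "N \<union> A = {1..n}" "N \<inter> A = {}"
    and alpha: "\<alpha> > 0"
    and g: "strict_mono g"
    and local: "F_local {1..n} E A F"
    and k: "k \<in> N"
  defines "w \<equiv> received N g x xA t"
  defines "Mt \<equiv> Max ((\<lambda>j. x j t) ` N)" and "mt \<equiv> Min ((\<lambda>j. x j t) ` N)"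
  shows "x k t = Mt \<Longrightarrow> ftrc_input E F \<alpha> (w k) k \<le> 0"
    and "x k t = Mt \<Longrightarrow> 2*F+1 \<le> card (in_nbrs E k - {j\<in>N. x j t = Mt}) \<Longrightarrow> ftrc_input E F \<alpha> (w k) k = -\<alpha>"
    and "x k t = mt \<Longrightarrow> ftrc_input E F \<alpha> (w k) k \<ge> 0"
    and "x k t = mt \<Longrightarrow> 2*F+1 \<le> card (in_nbrs E k - {j\<in>N. x j t = mt}) \<Longrightarrow> ftrc_input E F \<alpha> (w k) k = \<alpha>"
proof -
  have finN: "finite N" using part(1) by (metis finite_Un finite_atLeastAtMost)
  have nb: "in_nbrs E k \<subseteq> N \<union> A" using E part(1) by (auto simp: in_nbrs_def)
  have finb: "finite (in_nbrs E k)" using nb finN part(1) by (metis finite_atLeastAtMost finite_subset)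
  have finbA: "finite (in_nbrs E k \<inter> A)" using finb by simp
  have kA: "k \<in> {1..n} - A" using k part by auto
  have locF: "card (in_nbrs E k \<inter> A) \<le> F" using local kA unfolding F_local_def by auto
  have wN: "w k j = g (x j t)" if "j \<in> N" for j using that by (simp add: w_def received_def)
  have wk: "w k k = g (x k t)" using wN[OF k] .
  have leM: "x j t \<le> Mt" if "j \<in> N" for j using finN that by (auto simp: Mt_def)
  have gem: "mt \<le> x j t" if "j \<in> N" for j using finN that by (auto simp: mt_def)
  have gle: "g a \<le> g b \<longleftrightarrow> a \<le> b" for a b using g by (simp add: strict_mono_less_eq)
  have glt: "g a < g b \<longleftrightarrow> a < b" for a b using g by (simp add: strict_mono_less)
  {
    assume kM: "x k t = Mt"
    have sub: "{j\<in>in_nbrs E k. w k j > w k k} \<subseteq> in_nbrs E k \<inter> A"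
    proof
      fix j assume j: "j \<in> {j\<in>in_nbrs E k. w k j > w k k}"
      show "j \<in> in_nbrs E k \<inter> A"
      proof (cases "j \<in> N")
        case True
        then have "w k j \<le> w k k" using wN wk leM kM gle by simp
        then show ?thesis using j by simp
      next
        case False then show ?thesis using j nb by auto
      qed
    qed
    have cb: "card {j\<in>in_nbrs E k. w k j > w k k} \<le> F"
      using card_mono[OF finbA sub] locF by linarith
    show "ftrc_input E F \<alpha> (w k) k \<le> 0" by (rule input_top(1)[OF finb alpha cb])
    assume r: "2*F+1 \<le> card (in_nbrs E k - {j\<in>N. x j t = Mt})"
    define P where "P = (in_nbrs E k - {j\<in>N. x j t = Mt}) \<inter> N"
    have "in_nbrs E k - {j\<in>N. x j t = Mt} \<subseteq> P \<union> (in_nbrs E k \<inter> A)" using nb by (auto simp: P_def)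
    then have "card (in_nbrs E k - {j\<in>N. x j t = Mt}) \<le> card (P \<union> (in_nbrs E k \<inter> A))"
      using finb by (intro card_mono) (auto simp: P_def)
    also have "\<dots> \<le> card P + card (in_nbrs E k \<inter> A)" by (rule card_Un_le)
    finally have cP: "F < card P" using r locF by linarith
    have Psub: "P \<subseteq> in_nbrs E k" by (auto simp: P_def)
    have Plt: "\<forall>p\<in>P. w k p < w k k"
    proof
      fix p assume p: "p \<in> P"
      then have "p \<in> N" "x p t \<noteq> Mt" by (auto simp: P_def)
      then have "x p t < x k t" using leM kM by force
      then show "w k p < w k k" using wN[OF \<open>p \<in> N\<close>] wk glt by simp
    qed
    show "ftrc_input E F \<alpha> (w k) k = -\<alpha>" by (rule input_top(2)[OF finb alpha cb Psub cP Plt])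
  }
  {
    assume km: "x k t = mt"
    have sub: "{j\<in>in_nbrs E k. w k j < w k k} \<subseteq> in_nbrs E k \<inter> A"
    proof
      fix j assume j: "j \<in> {j\<in>in_nbrs E k. w k j < w k k}"
      show "j \<in> in_nbrs E k \<inter> A"
      proof (cases "j \<in> N")
        case True
        then have "w k k \<le> w k j" using wN wk gem km gle by simp
        then show ?thesis using j by simp
      next
        case False then show ?thesis using j nb by auto
      qed
    qed
    have cb: "card {j\<in>in_nbrs E k. w k j < w k k} \<le> F"
      using card_mono[OF finbA sub] locF by linarith
    show "ftrc_input E F \<alpha> (w k) k \<ge> 0" by (rule input_bot(1)[OF finb alpha cb])
    assume r: "2*F+1 \<le> card (in_nbrs E k - {j\<in>N. x j t = mt})"
    define P where "P = (in_nbrs E k - {j\<in>N. x j t = mt}) \<inter> N"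
    have "in_nbrs E k - {j\<in>N. x j t = mt} \<subseteq> P \<union> (in_nbrs E k \<inter> A)" using nb by (auto simp: P_def)
    then have "card (in_nbrs E k - {j\<in>N. x j t = mt}) \<le> card (P \<union> (in_nbrs E k \<inter> A))"
      using finb by (intro card_mono) (auto simp: P_def)
    also have "\<dots> \<le> card P + card (in_nbrs E k \<inter> A)" by (rule card_Un_le)
    finally have cP: "F < card P" using r locF by linarith
    have Psub: "P \<subseteq> in_nbrs E k" by (auto simp: P_def)
    have Plt: "\<forall>p\<in>P. w k p > w k k"
    proof
      fix p assume p: "p \<in> P"
      then have "p \<in> N" "x p t \<noteq> mt" by (auto simp: P_def)
      then have "x p t > x k t" using gem km by force
      then show "w k p > w k k" using wN[OF \<open>p \<in> N\<close>] wk glt by simp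
    qed
    show "ftrc_input E F \<alpha> (w k) k = \<alpha>" by (rule input_bot(2)[OF finb alpha cb Psub cP Plt])
  }
qed


theorem theorem5:
  fixes n F :: nat and \<alpha> :: real and E :: "(nat \<times> nat) set"
    and N A :: "nat set" and g :: "real \<Rightarrow> real"
    and xA :: "nat \<Rightarrow> nat \<Rightarrow> real \<Rightarrow> real"
  assumes n2: "n \<ge> 2"
    and E: "E \<subseteq> {1..n} \<times> {1..n}"
    and part: "N \<union> A = {1..n}" "N \<inter> A = {}"
    and alpha: "\<alpha> > 0"
    and g: "strict_mono g"
    and meas: "\<forall>k\<in>A. \<forall>i\<in>N. (\<lambda>t. g (xA k i t)) \<in> borel_measurable lebesgue"
    and local: "F_local {1..n} E A F"
    and robust: "r_robust {1..n} E (2 * F + 1)"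
  shows "\<exists>T :: (nat \<Rightarrow> real) \<Rightarrow> real. (\<forall>y. T y \<ge> 0) \<and>
     (\<forall>x. ftrc_trajectory {1..n} E F \<alpha> N g xA x \<longrightarrow>
        (\<forall>t\<ge>0. \<forall>i\<in>N. Min ((\<lambda>j. x j 0) ` N) \<le> x i t \<and> x i t \<le> Max ((\<lambda>j. x j 0) ` N)) \<and>
        (\<forall>t\<ge>T (restrict (\<lambda>j. x j 0) N). \<forall>i\<in>N. \<forall>j\<in>N. x i t = x j t))"
proof -
  define T where "T = (\<lambda>y::nat\<Rightarrow>real. max 0 ((Max (y ` N) - Min (y ` N)) / \<alpha>))"
  have finN: "finite N" using part(1) by (metis finite_Un finite_atLeastAtMost)
  have main: "(\<forall>t\<ge>0. \<forall>i\<in>N. Min ((\<lambda>j. x j 0) ` N) \<le> x i t \<and> x i t \<le> Max ((\<lambda>j. x j 0) ` N)) \<and>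
        (\<forall>t\<ge>T (restrict (\<lambda>j. x j 0) N). \<forall>i\<in>N. \<forall>j\<in>N. x i t = x j t)"
    if traj: "ftrc_trajectory {1..n} E F \<alpha> N g xA x" for x
  proof (cases "N = {}")
    case True then show ?thesis by simp
  next
    case False
    note ne = False
    define ud where "ud j t = ftrc_input E F \<alpha> (received N g x xA t j) j" for j t
    have AC: "\<And>k b. k \<in> N \<Longrightarrow> b \<ge> 0 \<Longrightarrow> abs_cont_on {0..b} (x k)"
      using traj unfolding ftrc_trajectory_def loc_abs_cont_nonneg_def by blast
    obtain Z where Znull: "Z \<in> null_sets lebesgue" and
      der: "\<And>t k. t \<ge> 0 \<Longrightarrow> t \<notin> Z \<Longrightarrow> k \<in> N \<Longrightarrow> (x k has_real_derivative ud k t) (at t)"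
      using traj unfolding ftrc_trajectory_def ud_def by (metis Diff_iff atLeast_iff)
    have Zneg: "negligible Z" using Znull negligible_iff_null_sets by blast
    define M where "M s = Max ((\<lambda>j. x j s) ` N)" for s
    define P where "P s = Max ((\<lambda>j. - x j s) ` N)" for s
    define V where "V s = M s + P s" for s
    have MinP: "Min ((\<lambda>j. x j s) ` N) = - P s" for s
      using Min_neg[OF finN ne] by (simp add: P_def)
    have xle: "x j s \<le> M s" "- x j s \<le> P s" if "j \<in> N" for j s
      using finN that by (auto simp: M_def P_def)
    have V0: "V s \<ge> 0" for s
    proof -
      obtain j where "j \<in> N" using ne by blast
      from xle[OF this, of s] show ?thesis by (simp add: V_def)
    qed
    have ACM: "abs_cont_on {0..b} M" "abs_cont_on {0..b} P" "abs_cont_on {0..b} V" if b: "b \<ge> 0" for b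
    proof -
      have acx: "\<forall>j\<in>N. abs_cont_on {0..b} (x j)" using AC b by blast
      have dM: "\<bar>M v - M u\<bar> \<le> 1 * (\<Sum>j\<in>N. \<bar>x j v - x j u\<bar>)" for u v
        using Max_diff_le[OF finN ne, of "\<lambda>j. x j v" "\<lambda>j. x j u"] by (simp add: M_def)
      have dP: "\<bar>P v - P u\<bar> \<le> 1 * (\<Sum>j\<in>N. \<bar>x j v - x j u\<bar>)" for u v
        using Max_diff_le[OF finN ne, of "\<lambda>j. - x j v" "\<lambda>j. - x j u"] by (simp add: P_def abs_minus_commute)
      have dV: "\<bar>V v - V u\<bar> \<le> 2 * (\<Sum>j\<in>N. \<bar>x j v - x j u\<bar>)" for u v
      proof -
        have "\<bar>V v - V u\<bar> \<le> \<bar>M v - M u\<bar> + \<bar>P v - P u\<bar>" by (simp add: V_def)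
        then show ?thesis using dM[of v u] dP[of v u] by simp
      qed
      show "abs_cont_on {0..b} M" by (rule ac_dominated[OF finN acx _ dM]) simp
      show "abs_cont_on {0..b} P" by (rule ac_dominated[OF finN acx _ dP]) simp
      show "abs_cont_on {0..b} V" by (rule ac_dominated[OF finN acx _ dV]) simp
    qed
    have inM: "ud k t \<le> 0" if "k \<in> N" "x k t = M t" for k t
      using comb_facts(1)[OF E part alpha g local that(1)] that by (simp add: ud_def M_def)
    have inP: "- ud k t \<le> 0" if "k \<in> N" "- x k t = P t" for k t
    proof -
      have "x k t = Min ((\<lambda>j. x j t) ` N)" using that MinP by simp
      then show ?thesis using comb_facts(3)[OF E part alpha g local that(1)] by (simp add: ud_def)
    qed
    have vals: "ud k t \<in> {-\<alpha>, 0, \<alpha>}" for k t unfolding ud_def by (rule input_vals)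
    have derM: "((\<lambda>s. - x k s) has_real_derivative - ud k t) (at t)" if "t \<ge> 0" "t \<notin> Z" "k \<in> N" for k t
      using der[OF that] by (rule DERIV_minus)
    have exM: "\<exists>i\<in>N. x i s = M s" for s
    proof -
      have "M s \<in> (\<lambda>j. x j s) ` N" using finN ne by (simp add: M_def)
      then show ?thesis by auto
    qed
    have exP: "\<exists>i\<in>N. - x i s = P s" for s
    proof -
      have "P s \<in> (\<lambda>j. - x j s) ` N" using finN ne by (simp add: P_def)
      then show ?thesis by auto
    qed
    have locM: "\<exists>r>0. \<forall>u v. t - r < u \<longrightarrow> u \<le> t \<longrightarrow> t \<le> v \<longrightarrow> v < t + r \<longrightarrow> M v - M u \<le> (0+e)*(v-u)"
      if t: "t \<ge> 0" "t \<notin> Z" and e: "e > 0" for t e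
    proof (rule loc_from_ev)
      show "eventually (\<lambda>s. M s \<le> M t + (0+e)*(s-t)) (at_right t)"
        unfolding M_def
        by (rule top_right[where y="\<lambda>j s. x j s", OF finN ne der[OF t] _ e]) (use inM in \<open>auto simp: M_def\<close>)
      obtain i where i: "i \<in> N" "x i t = M t" using exM by blast
      show "eventually (\<lambda>s. M t + (0+e)*(s-t) \<le> M s) (at_left t)"
        unfolding M_def
        by (rule top_left[where y="\<lambda>j s. x j s", OF finN der[OF t i(1)] i(1) _ inM[OF i] e]) (use i in \<open>simp add: M_def\<close>)
    qed
    have locP: "\<exists>r>0. \<forall>u v. t - r < u \<longrightarrow> u \<le> t \<longrightarrow> t \<le> v \<longrightarrow> v < t + r \<longrightarrow> P v - P u \<le> (0+e)*(v-u)"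
      if t: "t \<ge> 0" "t \<notin> Z" and e: "e > 0" for t e
    proof (rule loc_from_ev)
      show "eventually (\<lambda>s. P s \<le> P t + (0+e)*(s-t)) (at_right t)"
        unfolding P_def
        by (rule top_right[where y="\<lambda>j s. - x j s", OF finN ne derM[OF t] _ e]) (use inP in \<open>auto simp: P_def\<close>)
      obtain i where i: "i \<in> N" "- x i t = P t" using exP by blast
      show "eventually (\<lambda>s. P t + (0+e)*(s-t) \<le> P s) (at_left t)"
        unfolding P_def
        by (rule top_left[where y="\<lambda>j s. - x j s", OF finN derM[OF t i(1)] i(1) _ inP[OF i] e]) (use i in \<open>simp add: P_def\<close>)
    qed
    have Mmono: "M b \<le> M a" if "0 \<le> a" "a \<le> b" for a b
    proof -
      have "M b - M a \<le> 0 * (b - a)"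
        by (rule gauge_bound[OF that(2) ACM(1)[of b] _ Zneg]) (use that locM in auto)
      then show ?thesis by simp
    qed
    have Pmono: "P b \<le> P a" if "0 \<le> a" "a \<le> b" for a b
    proof -
      have "P b - P a \<le> 0 * (b - a)"
        by (rule gauge_bound[OF that(2) ACM(2)[of b] _ Zneg]) (use that locP in auto)
      then show ?thesis by simp
    qed
    have Vmono: "V b \<le> V a" if "0 \<le> a" "a \<le> b" for a b
      using Mmono[OF that] Pmono[OF that] by (simp add: V_def)
    have part1: "\<forall>t\<ge>0. \<forall>i\<in>N. Min ((\<lambda>j. x j 0) ` N) \<le> x i t \<and> x i t \<le> Max ((\<lambda>j. x j 0) ` N)"
    proof (intro allI impI ballI conjI)
      fix t :: real and i assume t: "t \<ge> 0" and i: "i \<in> N"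
      show "x i t \<le> Max ((\<lambda>j. x j 0) ` N)" using xle(1)[OF i, of t] Mmono[OF order_refl t] by (simp add: M_def)
      show "Min ((\<lambda>j. x j 0) ` N) \<le> x i t" using xle(2)[OF i, of t] Pmono[OF order_refl t] MinP[of 0] by simp
    qed
    define B1 where "B1 = {t. \<exists>r>0. \<forall>s. s \<noteq> t \<and> \<bar>s - t\<bar> < r \<longrightarrow> M t + \<alpha>/2*t < M s + \<alpha>/2 * s}"
    define B2 where "B2 = {t. \<exists>r>0. \<forall>s. s \<noteq> t \<and> \<bar>s - t\<bar> < r \<longrightarrow> P t + \<alpha>/2*t < P s + \<alpha>/2 * s}"
    have cB1: "countable B1" using countable_strict_locmin[of "\<lambda>s. M s + \<alpha>/2 * s"] by (simp add: B1_def)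
    have cB2: "countable B2" using countable_strict_locmin[of "\<lambda>s. P s + \<alpha>/2 * s"] by (simp add: B2_def)
    have negc: "negligible B" if "countable B" for B :: "real set"
      using that negligible_iff_null_sets null_sets_completionI countable_imp_null_set_lborel by metis
    have Z'neg: "negligible (Z \<union> B1 \<union> B2)" using Zneg negc[OF cB1] negc[OF cB2] by (simp add: negligible_Un)
    have evMr: "eventually (\<lambda>s. M s \<le> M t + (c+e)*(s-t)) (at_right t)"
      if t: "t \<ge> 0" "t \<notin> Z" and c: "\<And>j. j \<in> N \<Longrightarrow> x j t = M t \<Longrightarrow> ud j t \<le> c" and e: "e > 0" for t c e
      unfolding M_def
      by (rule top_right[where y="\<lambda>j s. x j s", OF finN ne der[OF t] _ e]) (use c in \<open>auto simp: M_def\<close>)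
    have evMl: "eventually (\<lambda>s. M t + (c+e)*(s-t) \<le> M s) (at_left t)"
      if t: "t \<ge> 0" "t \<notin> Z" and i: "i \<in> N" "x i t = M t" "ud i t \<le> c" and e: "e > 0" for t c e i
      unfolding M_def
      by (rule top_left[where y="\<lambda>j s. x j s", OF finN der[OF t i(1)] i(1) _ i(3) e]) (use i in \<open>simp add: M_def\<close>)
    have evPr: "eventually (\<lambda>s. P s \<le> P t + (c+e)*(s-t)) (at_right t)"
      if t: "t \<ge> 0" "t \<notin> Z" and c: "\<And>j. j \<in> N \<Longrightarrow> - x j t = P t \<Longrightarrow> - ud j t \<le> c" and e: "e > 0" for t c e
      unfolding P_def
      by (rule top_right[where y="\<lambda>j s. - x j s", OF finN ne derM[OF t] _ e]) (use c in \<open>auto simp: P_def\<close>)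
    have evPl: "eventually (\<lambda>s. P t + (c+e)*(s-t) \<le> P s) (at_left t)"
      if t: "t \<ge> 0" "t \<notin> Z" and i: "i \<in> N" "- x i t = P t" "- ud i t \<le> c" and e: "e > 0" for t c e i
      unfolding P_def
      by (rule top_left[where y="\<lambda>j s. - x j s", OF finN derM[OF t i(1)] i(1) _ i(3) e]) (use i in \<open>simp add: P_def\<close>)
    have combine: "\<exists>r>0. \<forall>u v. t - r < u \<longrightarrow> u \<le> t \<longrightarrow> t \<le> v \<longrightarrow> v < t + r \<longrightarrow> V v - V u \<le> (-\<alpha>+e)*(v-u)"
      if r1: "eventually (\<lambda>s. M s \<le> M t + (cM+e/2)*(s-t)) (at_right t)"
        and r2: "eventually (\<lambda>s. P s \<le> P t + (cP+e/2)*(s-t)) (at_right t)"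
        and l1: "eventually (\<lambda>s. M t + (cM+e/2)*(s-t) \<le> M s) (at_left t)"
        and l2: "eventually (\<lambda>s. P t + (cP+e/2)*(s-t) \<le> P s) (at_left t)"
        and cc: "cM + cP = -\<alpha>" for t e cM cP
    proof (rule loc_from_ev)
      have eq: "(cM+e/2)*(s-t) + (cP+e/2)*(s-t) = (-\<alpha>+e)*(s-t)" for s
      proof -
        have "(cM+e/2)*(s-t) + (cP+e/2)*(s-t) = ((cM+e/2) + (cP+e/2))*(s-t)" by (rule distrib_right[symmetric])
        also have "(cM+e/2) + (cP+e/2) = -\<alpha>+e" using cc by simp
        finally show ?thesis .
      qed
      show "eventually (\<lambda>s. V s \<le> V t + (-\<alpha>+e)*(s-t)) (at_right t)"
        using r1 r2 proof eventually_elim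
        case (elim s) then show ?case using eq[of s] unfolding V_def by linarith
      qed
      show "eventually (\<lambda>s. V t + (-\<alpha>+e)*(s-t) \<le> V s) (at_left t)"
        using l1 l2 proof eventually_elim
        case (elim s) then show ?case using eq[of s] unfolding V_def by linarith
      qed
    qed
    have Vloc: "\<exists>r>0. \<forall>u v. t - r < u \<longrightarrow> u \<le> t \<longrightarrow> t \<le> v \<longrightarrow> v < t + r \<longrightarrow> V v - V u \<le> (-\<alpha>+e)*(v-u)"
      if t: "t \<ge> 0" "t \<notin> Z" and tB: "t \<notin> B1" "t \<notin> B2" and Vt: "V t > 0" and e: "e > 0" for t e
    proof -
      have e2: "e/2 > 0" using e by simp
      define SM where "SM = {j\<in>N. x j t = M t}"
      define Sm where "Sm = {j\<in>N. x j t = Min ((\<lambda>j. x j t) ` N)}"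
      have Mm: "M t \<noteq> Min ((\<lambda>j. x j t) ` N)" using Vt MinP[of t] by (simp add: V_def)
      obtain iM where iM: "iM \<in> N" "x iM t = M t" using exM by blast
      obtain iP where iP: "iP \<in> N" "- x iP t = P t" using exP by blast
      have SMne: "SM \<noteq> {}" using iM by (auto simp: SM_def)
      have Smne: "Sm \<noteq> {}" using iP MinP[of t] by (auto simp: Sm_def)
      have disj: "SM \<inter> Sm = {}" using Mm by (auto simp: SM_def Sm_def)
      have subs: "SM \<subseteq> {1..n}" "Sm \<subseteq> {1..n}" using part(1) by (auto simp: SM_def Sm_def)
      have "r_reachable E SM (2*F+1) \<or> r_reachable E Sm (2*F+1)"
        using robust subs SMne Smne disj unfolding r_robust_def by blast
      then show ?thesis
      proof
        assume "r_reachable E SM (2*F+1)"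
        then obtain k where k: "k \<in> SM" "2*F+1 \<le> card (in_nbrs E k - SM)" unfolding r_reachable_def by blast
        have kN: "k \<in> N" "x k t = M t" using k by (auto simp: SM_def)
        have uk: "ud k t = -\<alpha>"
          using comb_facts(2)[OF E part alpha g local kN(1), of x t xA] kN k(2)
          by (simp add: ud_def M_def SM_def)
        have allM: "ud j t \<le> -\<alpha>" if j: "j \<in> N" "x j t = M t" for j
        proof (rule ccontr)
          assume "\<not> ud j t \<le> -\<alpha>"
          then have uj: "ud j t \<ge> 0" using vals[of j t] alpha by auto
          have "t \<in> B1"
            using top_strict[where y="\<lambda>j s. x j s", OF finN der[OF t kN(1)] der[OF t j(1)] kN(1) _ j(1) _ alpha _ uj]
              kN j uk unfolding B1_def by (simp add: M_def)
          then show False using tB by simp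
        qed
        have a: "eventually (\<lambda>s. M s \<le> M t + (-\<alpha>+e/2)*(s-t)) (at_right t)"
          by (rule evMr[OF t allM e2])
        have b: "eventually (\<lambda>s. P s \<le> P t + (0+e/2)*(s-t)) (at_right t)"
          by (rule evPr[OF t inP e2])
        have c: "eventually (\<lambda>s. M t + (-\<alpha>+e/2)*(s-t) \<le> M s) (at_left t)"
          by (rule evMl[OF t kN]) (use uk e2 in auto)
        have d: "eventually (\<lambda>s. P t + (0+e/2)*(s-t) \<le> P s) (at_left t)"
          by (rule evPl[OF t iP inP[OF iP] e2])
        show ?thesis by (rule combine[OF a b c d]) simp
      next
        assume "r_reachable E Sm (2*F+1)"
        then obtain k where k: "k \<in> Sm" "2*F+1 \<le> card (in_nbrs E k - Sm)" unfolding r_reachable_def by blast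
        have kN: "k \<in> N" "x k t = Min ((\<lambda>j. x j t) ` N)" using k by (auto simp: Sm_def)
        have kP: "- x k t = P t" using kN MinP[of t] by simp
        have uk: "ud k t = \<alpha>"
          using comb_facts(4)[OF E part alpha g local kN(1), of x t xA] kN k(2)
          by (simp add: ud_def Sm_def)
        have allP: "- ud j t \<le> -\<alpha>" if j: "j \<in> N" "- x j t = P t" for j
        proof (rule ccontr)
          assume "\<not> - ud j t \<le> -\<alpha>"
          then have uj: "- ud j t \<ge> 0" using vals[of j t] alpha by auto
          have "t \<in> B2"
            using top_strict[where y="\<lambda>j s. - x j s", OF finN derM[OF t kN(1)] derM[OF t j(1)] kN(1) _ j(1) _ alpha _ uj]
              kP j uk unfolding B2_def by (simp add: P_def)
          then show False using tB by simp
        qed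
        have a: "eventually (\<lambda>s. M s \<le> M t + (0+e/2)*(s-t)) (at_right t)"
          by (rule evMr[OF t inM e2])
        have b: "eventually (\<lambda>s. P s \<le> P t + (-\<alpha>+e/2)*(s-t)) (at_right t)"
          by (rule evPr[OF t allP e2])
        have c: "eventually (\<lambda>s. M t + (0+e/2)*(s-t) \<le> M s) (at_left t)"
          by (rule evMl[OF t iM inM[OF iM] e2])
        have d: "eventually (\<lambda>s. P t + (-\<alpha>+e/2)*(s-t) \<le> P s) (at_left t)"
          by (rule evPl[OF t kN(1) kP]) (use uk e2 in auto)
        show ?thesis by (rule combine[OF a b c d]) simp
      qed
    qed
    have Tx: "T (restrict (\<lambda>j. x j 0) N) = max 0 (V 0 / \<alpha>)"
    proof -
      have "restrict (\<lambda>j. x j 0) N ` N = (\<lambda>j. x j 0) ` N" by auto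
      then show ?thesis using MinP[of 0] by (simp add: T_def V_def M_def)
    qed
    have part2: "\<forall>t\<ge>T (restrict (\<lambda>j. x j 0) N). \<forall>i\<in>N. \<forall>j\<in>N. x i t = x j t"
    proof (intro allI impI ballI)
      fix t :: real and i j assume tT: "t \<ge> T (restrict (\<lambda>j. x j 0) N)" and i: "i \<in> N" and j: "j \<in> N"
      have t0: "t \<ge> 0" and tV: "t \<ge> V 0 / \<alpha>" using tT Tx by auto
      have "V t \<le> 0"
      proof (rule ccontr)
        assume "\<not> V t \<le> 0"
        then have Vt: "V t > 0" by simp
        have "V t - V 0 \<le> (-\<alpha>) * (t - 0)"
        proof (rule gauge_bound[OF t0 ACM(3)[OF t0] _ Z'neg])
          show "{0..t} \<subseteq> {0..t}" by simp
          fix s e :: real assume s: "s \<in> {0..t}" "s \<notin> Z \<union> B1 \<union> B2" and e: "e > 0"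
          have "V s \<ge> V t" using Vmono[of s t] s by auto
          then have "V s > 0" using Vt by simp
          then show "\<exists>r>0. \<forall>u v. s - r < u \<longrightarrow> u \<le> s \<longrightarrow> s \<le> v \<longrightarrow> v < s + r \<longrightarrow> V v - V u \<le> (-\<alpha>+e)*(v-u)"
            using Vloc[of s e] s e by auto
        qed
        moreover have "\<alpha> * t \<ge> V 0" using tV alpha by (simp add: field_simps)
        ultimately show False using Vt by simp
      qed
      then have Vt0: "V t = 0" using V0[of t] by simp
      have "x i t = M t" "x j t = M t"
        using xle[OF i, of t] xle[OF j, of t] Vt0 by (auto simp: V_def)
      then show "x i t = x j t" by simp
    qed
    show ?thesis using part1 part2 by blast
  qed
  show ?thesis
    by (rule exI[of _ T]) (use main in \<open>auto simp: T_def\<close>)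
qed


end
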